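(* Let $n\ge 1$, $d\ge 1$, let $k$ be an integer with $1\le k\le n$, let $\theta\in[0,1]$, let $\boldsymbol c\in\mathbb{R}^n$, and let $\boldsymbol E\in\mathbb{R}^{n\times d}$ have rows $\boldsymbol e_1,\dots,\boldsymbol e_n$ with $\|\boldsymbol e_i\|_2=1$ for all $i$. For $\lambda\in\mathbb{R}$ define $$f(\boldsymbol x)=\theta\,(k-1)\,\boldsymbol c^{\mathsf T}\boldsymbol x+(1-\theta)\,\boldsymbol x^{\mathsf T}(\lambda \boldsymbol I-\boldsymbol E\boldsymbol E^{\mathsf T})\boldsymbol x .$$ If $\lambda\ge 2$, then $$\max\{f(\boldsymbol x): \boldsymbol x\in\{0,1\}^n,\ \boldsymbol 1^{\mathsf T}\boldsymbol x=k\}=\max\{f(\boldsymbol x): \boldsymbol x\in[0,1]^n,\ \boldsymbol 1^{\mathsf T}\boldsymbol x=k\},$$ i.e. the relaxed problem has an integral (0/1) global maximizer, and every global maximizer of the binary problem is a global maximizer of the relaxed problem. Moreover, for every feasible $\boldsymbol x\in[0,1]^n$ with $\boldsymbol 1^{\mathsf T}\boldsymbol x=k$ there is an integral feasible $\boldsymbol x^\ast\in\{0,1\}^n$ with $\boldsymbol 1^{\mathsf T}\boldsymbol x^\ast=k$ and $f(\boldsymbol x^\ast)\ge f(\boldsymbol x)$.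
   Context: The binary problem is the cardinality-constrained binary quadratic program $\max f(\boldsymbol x)$ over $\boldsymbol x\in\{0,1\}^n$ with $\boldsymbol 1^{\mathsf T}\boldsymbol x=k$; the relaxed problem replaces $\{0,1\}^n$ by $[0,1]^n$. The relaxation is called tight if the two global maximum values coincide. Note that the diagonal entries of $\boldsymbol W=\boldsymbol E\boldsymbol E^{\mathsf T}$ equal $1$ and its off-diagonal entries $w_{ij}=\boldsymbol e_i^{\mathsf T}\boldsymbol e_j$ lie in $[-1,1]$. *)

theory Defs
  imports "HOL-Analysis.Analysis"
begin

definition obj :: "real \<Rightarrow> nat \<Rightarrow> real \<Rightarrow> real^'n \<Rightarrow> real^'d^'n \<Rightarrow> real^'n \<Rightarrow> real" where
  "obj \<theta> k lam c E x =
     \<theta> * (real k - 1) * (c \<bullet> x)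
     + (1 - \<theta>) * (x \<bullet> ((lam *\<^sub>R mat 1 - E ** transpose E) *v x))"

definition binfeas :: "nat \<Rightarrow> (real^'n) set" where
  "binfeas k = {x. (\<forall>i. x $ i = 0 \<or> x $ i = 1) \<and> (\<Sum>i\<in>UNIV. x $ i) = real k}"

definition relfeas :: "nat \<Rightarrow> (real^'n) set" where
  "relfeas k = {x. (\<forall>i. 0 \<le> x $ i \<and> x $ i \<le> 1) \<and> (\<Sum>i\<in>UNIV. x $ i) = real k}"

end

theory Submission
  imports Defs
begin

definition qf :: "real \<Rightarrow> real^'n^'d \<Rightarrow> real^'n \<Rightarrow> real" where
  "qf lam B z = lam * (z \<bullet> z) - (B *v z) \<bullet> (B *v z)"

lemma obj_alt: "obj \<theta> k lam c E x = \<theta> * (real k - 1) * (c \<bullet> x) + (1 - \<theta>) * qf lam (transpose E) x"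
proof -
  have "x \<bullet> ((lam *\<^sub>R mat 1 - E ** transpose E) *v x)
      = x \<bullet> (lam *\<^sub>R x) - x \<bullet> (E *v (transpose E *v x))"
    by (simp only: matrix_vector_mult_diff_rdistrib matrix_vector_mul_assoc inner_diff_right
        flip: scaleR_matrix_vector_assoc) simp
  also have "x \<bullet> (E *v (transpose E *v x)) = (transpose E *v x) \<bullet> (transpose E *v x)"
    by (simp only: flip: dot_lmul_matrix) (simp add: inner_commute)
  finally have "x \<bullet> ((lam *\<^sub>R mat 1 - E ** transpose E) *v x) = qf lam (transpose E) x"
    unfolding qf_def by (simp add: algebra_simps del: transpose_matrix_vector)
  thus ?thesis unfolding obj_def by simp
qed

lemma qf_comb: "qf lam B ((1-s) *\<^sub>R a + s *\<^sub>R b) = (1-s) * qf lam B a + s * qf lam B b - s*(1-s) * qf lam B (b - a)"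
proof -
  have gen: "((1-s) *\<^sub>R p + s *\<^sub>R q) \<bullet> ((1-s) *\<^sub>R p + s *\<^sub>R q) = (1-s) * (p \<bullet> p) + s * (q \<bullet> q) - s*(1-s)*((q - p) \<bullet> (q - p))" for p q :: "'v::real_inner"
  proof -
    have "(q - p) \<bullet> (q - p) = q \<bullet> q - 2 * (p \<bullet> q) + p \<bullet> p"
      by (simp add: inner_diff_left inner_diff_right inner_commute)
    moreover have "((1-s) *\<^sub>R p + s *\<^sub>R q) \<bullet> ((1-s) *\<^sub>R p + s *\<^sub>R q) = (1-s)^2 * (p \<bullet> p) + 2 * s * (1 - s) * (p \<bullet> q) + s^2 * (q \<bullet> q)"
      by (simp add: inner_add_left inner_add_right inner_commute power2_eq_square algebra_simps)
    ultimately show ?thesis by (simp add: power2_eq_square algebra_simps)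
  qed
  have "B *v ((1-s) *\<^sub>R a + s *\<^sub>R b) = (1-s) *\<^sub>R (B *v a) + s *\<^sub>R (B *v b)"
    by (simp add: vec.add matrix_scaleR_vector_ac scaleR_matrix_vector_assoc)
  moreover have "B *v (b - a) = B *v b - B *v a" by (simp add: vec.diff)
  ultimately show ?thesis unfolding qf_def gen by (simp add: algebra_simps)
qed

lemma qf_dir:
  fixes E :: "real^'d^'n"
  assumes hE: "\<And>i. norm (E $ i) = 1" and lam: "lam \<ge> 2" and ij: "i \<noteq> j"
  shows "qf lam (transpose E) (r *\<^sub>R (axis i 1 - axis j 1)) \<ge> 0"
proof -
  have sc: "qf lam B (r *\<^sub>R z) = r^2 * qf lam B z" for B z
    unfolding qf_def by (simp add: vec.scale power2_eq_square algebra_simps)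
  have tv: "transpose E *v (axis i 1 - axis j 1) = E $ i - E $ j"
    by (simp only: vec.diff matrix_vector_mult_basis column_transpose) (simp add: row_def)
  have "norm (E $ i - E $ j) \<le> 2" using norm_triangle_ineq4[of "E $ i" "E $ j"] hE by simp
  hence "(E $ i - E $ j) \<bullet> (E $ i - E $ j) \<le> 4"
    using power_mono[OF \<open>norm (E $ i - E $ j) \<le> 2\<close> norm_ge_zero, of 2]
    by (simp add: power2_norm_eq_inner)
  moreover have "(axis i 1 - axis j 1) \<bullet> (axis i (1::real) - axis j 1) = 2"
    using ij by (simp add: inner_diff_left inner_diff_right inner_axis_axis)
  ultimately have "qf lam (transpose E) (axis i 1 - axis j 1) \<ge> 0"
    unfolding qf_def tv using lam by simp
  thus ?thesis unfolding sc by simp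
qed


lemma obj_convex:
  fixes E :: "real^'d^'n"
  assumes hE: "\<And>i. norm (E $ i) = 1" and lam: "lam \<ge> 2" and ij: "i \<noteq> j"
    and th: "\<theta> \<le> 1" and s: "0 \<le> s" "s \<le> 1"
    and ba: "b - a = r *\<^sub>R (axis i 1 - axis j 1)"
  shows "obj \<theta> k lam c E ((1-s) *\<^sub>R a + s *\<^sub>R b) \<le> (1-s) * obj \<theta> k lam c E a + s * obj \<theta> k lam c E b"
proof -
  have q: "qf lam (transpose E) (b - a) \<ge> 0" unfolding ba by (rule qf_dir[OF hE lam ij])
  have "s * (1 - s) * qf lam (transpose E) (b - a) \<ge> 0" using q s by simp
  hence "(1 - \<theta>) * (s * (1 - s) * qf lam (transpose E) (b - a)) \<ge> 0" using th by simp
  moreover have "c \<bullet> ((1-s) *\<^sub>R a + s *\<^sub>R b) = (1-s) * (c \<bullet> a) + s * (c \<bullet> b)"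
    by (simp add: inner_add_right)
  ultimately show ?thesis unfolding obj_alt qf_comb by (simp add: algebra_simps)
qed

lemma not_int_frac: "(y::real) \<in> \<int> \<Longrightarrow> 0 < y \<Longrightarrow> y < 1 \<Longrightarrow> False"
  by (metis Ints_cases of_int_0_less_iff of_int_less_1_iff zero_less_iff_neq_zero int_one_le_iff_zero_less linorder_not_le)

lemma rounding:
  fixes E :: "real^'d^'n"
  assumes hE: "\<And>i. norm (E $ i) = 1" and lam: "lam \<ge> 2" and th: "\<theta> \<le> 1"
  shows "x \<in> relfeas k \<Longrightarrow> \<exists>x'\<in>binfeas k. obj \<theta> k lam c E x \<le> obj \<theta> k lam c E x'"
proof (induction "card {i. 0 < x$i \<and> x$i < 1}" arbitrary: x rule: less_induct)
  case less
  define F where "F = {i. 0 < x$i \<and> x$i < 1}"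
  have xr: "\<And>i. 0 \<le> x$i \<and> x$i \<le> 1" and xs: "(\<Sum>i\<in>UNIV. x $ i) = real k"
    using less.prems unfolding relfeas_def by auto
  show ?case
  proof (cases "F = {}")
    case True
    have "x $ m = 0 \<or> x $ m = 1" for m
    proof -
      have "\<not> (0 < x$m \<and> x$m < 1)" using True unfolding F_def by blast
      thus ?thesis using xr[of m] by linarith
    qed
    hence "x \<in> binfeas k" using xs unfolding binfeas_def by blast
    thus ?thesis by blast
  next
    case False
    then obtain i where iF: "i \<in> F" by blast
    have "\<exists>j\<in>F. j \<noteq> i"
    proof (rule ccontr)
      assume "\<not> ?thesis"
      hence oth: "\<And>j. j \<noteq> i \<Longrightarrow> x$j \<in> \<int>"
        using xr unfolding F_def by (metis (mono_tags, lifting) Ints_0 Ints_1 mem_Collect_eq order_less_le)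
      have "(\<Sum>j\<in>UNIV. x $ j) = x$i + (\<Sum>j\<in>UNIV-{i}. x $ j)"
        by (simp add: sum.remove)
      moreover have "(\<Sum>j\<in>UNIV-{i}. x $ j) \<in> \<int>" using oth by (intro Ints_sum) auto
      ultimately have "x$i \<in> \<int>" using xs
        by (metis Ints_diff Ints_of_nat add_diff_cancel_right')
      thus False using iF unfolding F_def using not_int_frac by blast
    qed
    then obtain j where jF: "j \<in> F" and ij: "i \<noteq> j" by blast
    define d :: "real^'n" where "d = axis i 1 - axis j 1"
    have dc: "\<And>m. d $ m = (if m = i then 1 else 0) - (if m = j then 1 else 0)"
      unfolding d_def by (simp add: axis_def)
    define t2 where "t2 = min (1 - x$i) (x$j)"
    define t1 where "t1 = - min (x$i) (1 - x$j)"
    have t2p: "t2 > 0" and t1n: "t1 < 0" using iF jF unfolding t1_def t2_def F_def by auto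
    define y1 where "y1 = x + t1 *\<^sub>R d"
    define y2 where "y2 = x + t2 *\<^sub>R d"
    have sumd: "(\<Sum>m\<in>UNIV. d $ m) = 0"
      unfolding dc by (simp add: sum_subtractf)
    have sumy: "(\<Sum>m\<in>UNIV. (x + t *\<^sub>R d) $ m) = real k" for t
      using xs sumd by (simp add: sum.distrib sum_distrib_left[symmetric])
    have "0 \<le> y1$m \<and> y1$m \<le> 1" for m
      using xr[of i] xr[of j] xr[of m] ij unfolding y1_def t1_def by (auto simp: dc min_def)
    hence y1r: "y1 \<in> relfeas k"
      unfolding relfeas_def using sumy[of t1] unfolding y1_def by blast
    have "0 \<le> y2$m \<and> y2$m \<le> 1" for m
      using xr[of i] xr[of j] xr[of m] ij unfolding y2_def t2_def by (auto simp: dc min_def)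
    hence y2r: "y2 \<in> relfeas k"
      unfolding relfeas_def using sumy[of t2] unfolding y2_def by blast
    have sub: "{m. 0 < (x + t *\<^sub>R d)$m \<and> (x + t *\<^sub>R d)$m < 1} \<subseteq> F" for t
      using iF jF unfolding F_def by (auto simp: dc split: if_splits)
    have "{m. 0 < y1$m \<and> y1$m < 1} \<noteq> F"
    proof (cases "x$i \<le> 1 - x$j")
      case True
      hence "y1 $ i = 0" unfolding y1_def t1_def using ij by (simp add: dc)
      thus ?thesis using iF by auto
    next
      case False
      hence "y1 $ j = 1" unfolding y1_def t1_def using ij by (simp add: dc)
      thus ?thesis using jF by auto
    qed
    hence c1: "card {m. 0 < y1$m \<and> y1$m < 1} < card {i. 0 < x$i \<and> x$i < 1}"
      using sub[of t1] unfolding y1_def F_def by (intro psubset_card_mono) auto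
    have "{m. 0 < y2$m \<and> y2$m < 1} \<noteq> F"
    proof (cases "1 - x$i \<le> x$j")
      case True
      hence "y2 $ i = 1" unfolding y2_def t2_def using ij by (simp add: dc)
      thus ?thesis using iF by auto
    next
      case False
      hence "y2 $ j = 0" unfolding y2_def t2_def using ij by (simp add: dc)
      thus ?thesis using jF by auto
    qed
    hence c2: "card {m. 0 < y2$m \<and> y2$m < 1} < card {i. 0 < x$i \<and> x$i < 1}"
      using sub[of t2] unfolding y2_def F_def by (intro psubset_card_mono) auto
    define s where "s = - t1 / (t2 - t1)"
    have s0: "0 \<le> s" and s1: "s \<le> 1" using t1n t2p unfolding s_def by (auto simp: field_simps)
    have "(1-s) * t1 + s * t2 = 0" using t1n t2p unfolding s_def by (simp add: field_simps)
    have "(1-s) *\<^sub>R y1 + s *\<^sub>R y2 = x + ((1-s) * t1 + s * t2) *\<^sub>R d"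
      unfolding y1_def y2_def by (simp add: algebra_simps)
    hence xe: "x = (1-s) *\<^sub>R y1 + s *\<^sub>R y2"
      using \<open>(1-s) * t1 + s * t2 = 0\<close> by simp
    have "y2 - y1 = (t2 - t1) *\<^sub>R (axis i 1 - axis j 1)"
      unfolding y1_def y2_def d_def by (simp add: algebra_simps)
    from obj_convex[OF hE lam ij th s0 s1 this, of k c]
    have "obj \<theta> k lam c E x \<le> (1-s) * obj \<theta> k lam c E y1 + s * obj \<theta> k lam c E y2"
      using xe by simp
    also have "\<dots> \<le> max (obj \<theta> k lam c E y1) (obj \<theta> k lam c E y2)"
      using s0 s1 by (smt (verit, best) convex_bound_le max.cobounded1 max.cobounded2)
    finally have le: "obj \<theta> k lam c E x \<le> max (obj \<theta> k lam c E y1) (obj \<theta> k lam c E y2)" .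
    obtain z1 where "z1 \<in> binfeas k" "obj \<theta> k lam c E y1 \<le> obj \<theta> k lam c E z1"
      using less.hyps[OF c1 y1r] by blast
    moreover obtain z2 where "z2 \<in> binfeas k" "obj \<theta> k lam c E y2 \<le> obj \<theta> k lam c E z2"
      using less.hyps[OF c2 y2r] by blast
    ultimately show ?thesis using le by (metis max_def order.trans)
  qed
qed

lemma binfeas_finite: "finite (binfeas k :: (real^'n) set)"
proof -
  have "binfeas k \<subseteq> (\<lambda>f. \<chi> i. f i) ` (PiE (UNIV::'n set) (\<lambda>_. {0::real, 1}))"
  proof
    fix x :: "real^'n" assume "x \<in> binfeas k"
    hence "(\<lambda>i. x $ i) \<in> PiE UNIV (\<lambda>_. {0::real, 1})" unfolding binfeas_def by auto
    thus "x \<in> (\<lambda>f. \<chi> i. f i) ` (PiE (UNIV::'n set) (\<lambda>_. {0::real, 1}))"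
      by (metis image_eqI vec_lambda_eta)
  qed
  moreover have "finite (PiE (UNIV::'n set) (\<lambda>_. {0::real, 1}))" by (intro finite_PiE) auto
  ultimately show ?thesis by (meson finite_imageI finite_subset)
qed

lemma binfeas_ne: assumes "k \<le> CARD('n)" shows "binfeas k \<noteq> ({} :: (real^'n) set)"
proof -
  obtain S :: "'n set" where S: "card S = k" using obtain_subset_with_card_n[OF assms] by metis
  define x :: "real^'n" where "x = (\<chi> i. if i \<in> S then 1 else 0)"
  have "x \<in> binfeas k" unfolding binfeas_def x_def using S by (simp add: sum.If_cases)
  thus ?thesis by blast
qed

lemma bin_sub_rel: "binfeas k \<subseteq> relfeas k"
proof
  fix x :: "real^'n" assume "x \<in> binfeas k"
  hence a: "\<And>i. x$i = 0 \<or> x$i = 1" and b: "(\<Sum>i\<in>UNIV. x $ i) = real k"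
    unfolding binfeas_def by auto
  have "\<And>i. 0 \<le> x$i \<and> x$i \<le> 1" using a by (metis order_refl zero_le_one)
  thus "x \<in> relfeas k" using b unfolding relfeas_def by blast
qed


theorem theorem1:
  fixes k :: nat and \<theta> lam :: real and c :: "real^'n" and E :: "real^'d^'n"
  assumes "1 \<le> k" and "k \<le> CARD('n)"
    and "0 \<le> \<theta>" and "\<theta> \<le> 1"
    and "\<And>i. norm (E $ i) = 1"
    and "lam \<ge> 2"
  shows "(MAX x\<in>binfeas k. obj \<theta> k lam c E x) = (SUP x\<in>relfeas k. obj \<theta> k lam c E x)
    \<and> (\<exists>x\<in>binfeas k. \<forall>y\<in>relfeas k. obj \<theta> k lam c E y \<le> obj \<theta> k lam c E x)
    \<and> (\<forall>x\<in>binfeas k. (\<forall>y\<in>binfeas k. obj \<theta> k lam c E y \<le> obj \<theta> k lam c E x)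
           \<longrightarrow> (\<forall>y\<in>relfeas k. obj \<theta> k lam c E y \<le> obj \<theta> k lam c E x))
    \<and> (\<forall>x\<in>relfeas k. \<exists>x'\<in>binfeas k. obj \<theta> k lam c E x \<le> obj \<theta> k lam c E x')"
proof -
  let ?g = "obj \<theta> k lam c E"
  let ?B = "binfeas k :: (real^'n) set"
  let ?R = "relfeas k :: (real^'n) set"
  have rnd: "\<And>y. y \<in> ?R \<Longrightarrow> \<exists>x'\<in>?B. ?g y \<le> ?g x'"
    using rounding[OF assms(5,6,4)] by blast
  have fin: "finite (?g ` ?B)" using binfeas_finite by blast
  have ne: "?g ` ?B \<noteq> {}" using binfeas_ne[OF assms(2)] by blast
  define M where "M = Max (?g ` ?B)"
  have Mge: "\<And>x. x \<in> ?B \<Longrightarrow> ?g x \<le> M" unfolding M_def using fin by auto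
  obtain x0 where x0: "x0 \<in> ?B" "?g x0 = M" unfolding M_def using Max_in[OF fin ne] by auto
  have relle: "\<And>y. y \<in> ?R \<Longrightarrow> ?g y \<le> M" using rnd Mge by (meson order.trans)
  have p1: "(MAX x\<in>?B. ?g x) = (SUP x\<in>?R. ?g x)"
  proof -
    have "(SUP x\<in>?R. ?g x) = M"
      by (rule cSup_eq_maximum) (use x0 bin_sub_rel relle in auto)
    thus ?thesis unfolding M_def by simp
  qed
  have p2: "\<exists>x\<in>?B. \<forall>y\<in>?R. ?g y \<le> ?g x" using x0 relle by auto
  have p3: "\<forall>x\<in>?B. (\<forall>y\<in>?B. ?g y \<le> ?g x) \<longrightarrow> (\<forall>y\<in>?R. ?g y \<le> ?g x)"
    using rnd by (meson order.trans)
  show ?thesis using p1 p2 p3 rnd by blast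
qed

end
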